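(* Let $\lambda\ge1$ and let $\nu_\lambda$ be the probability measure on $[-2,2]$ with density proportional to $\cos[(1-\frac1\lambda)\arcsin\frac x2]\,(4-x^2)^{-1/(2\lambda)}\mathbf 1_{(-2,2)}(x)$. Then the normalizing constant is $$c_\lambda:=\int_{-2}^2\cos\!\Big[\Big(1-\frac1\lambda\Big)\arcsin\frac x2\Big](4-x^2)^{-1/(2\lambda)}dx=2^{1-1/\lambda}\sqrt\pi\,\frac{\Gamma(1-\frac1{2\lambda})\Gamma(\frac32-\frac1{2\lambda})}{\Gamma(2-\frac1\lambda)},$$ the odd moments vanish, and for every integer $n\ge0$ $$m^\lambda_{2n}:=\int x^{2n}\nu_\lambda(dx)=2^{2n}\,{}_3F_2\!\left(\begin{matrix}-n,\;1-\frac1{2\lambda},\;\frac32-\frac1{2\lambda}\\ 2-\frac1\lambda,\;1\end{matrix};1\right).$$ Moreover, with $y=1/\lambda$, $m^\lambda_{2n}=\sum_{k=0}^n\binom nk 4^{n-k}\frac{(-1)^k}{k!}\prod_{m=k+2}^{2k+1}(m-y)$, so $m^\lambda_{2n}$ is a polynomial in $1/\lambda$.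
   Context: ${}_3F_2\left(\begin{matrix}a_1,a_2,a_3\\ b_1,b_2\end{matrix};x\right)=\sum_{k\ge0}\frac{(a_1)_k(a_2)_k(a_3)_k}{(b_1)_k(b_2)_k}\frac{x^k}{k!}$, with Pochhammer symbol $(a)_0=1$, $(a)_k=a(a+1)\cdots(a+k-1)$; for $a_1=-n$ the series terminates. An empty product equals $1$. *)

theory Defs
  imports "HOL-Probability.Probability"
begin

definition hyp3F2 :: "real \<Rightarrow> real \<Rightarrow> real \<Rightarrow> real \<Rightarrow> real \<Rightarrow> real \<Rightarrow> real" where
  "hyp3F2 a1 a2 a3 b1 b2 x =
     (\<Sum>k. pochhammer a1 k * pochhammer a2 k * pochhammer a3 k
            / (pochhammer b1 k * pochhammer b2 k) * x ^ k / fact k)"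

definition nu_dens :: "real \<Rightarrow> real \<Rightarrow> real" where
  "nu_dens lam x = cos ((1 - 1 / lam) * arcsin (x / 2)) * (4 - x^2) powr (- 1 / (2 * lam))"

definition c_const :: "real \<Rightarrow> real" where
  "c_const lam = (LBINT x=-2..2. nu_dens lam x)"

definition nu :: "real \<Rightarrow> real measure" where
  "nu lam = density lborel
     (\<lambda>x. ennreal (indicator {-2<..<2} x * nu_dens lam x / c_const lam))"

end

theory Submission
  imports Defs
begin


lemma cos_int_integral:
  fixes j :: int
  shows "((\<lambda>t. cos (2 * of_int j * t)) has_integral (if j = 0 then pi else 0)) {-pi/2..pi/2}"
proof (cases "j = 0")
  case True
  have "((\<lambda>x. 1::real) has_integral pi) {-pi/2..pi/2}"
    using has_integral_const_real[of "1::real" "-pi/2" "pi/2"] by simp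
  then show ?thesis using True by simp
next
  case False
  have d: "((\<lambda>t. sin (2 * of_int j * t) / (2 * of_int j)) has_real_derivative cos (2 * of_int j * t)) (at t within {-pi/2..pi/2})" for t
    using False by (auto intro!: derivative_eq_intros)
  have "((\<lambda>t. cos (2 * of_int j * t)) has_integral
        (sin (2 * of_int j * (pi/2)) / (2 * of_int j) - sin (2 * of_int j * (-pi/2)) / (2 * of_int j))) {-pi/2..pi/2}"
    by (rule fundamental_theorem_of_calculus, simp, rule d[unfolded has_real_derivative_iff_has_vector_derivative])
  moreover have "sin (2 * of_int j * (pi/2)) = 0" "sin (2 * of_int j * (-pi/2)) = 0"
    using sin_npi_int[of j] sin_npi_int[of "-j"] by (simp_all add: mult.commute)
  ultimately show ?thesis using False by simp
qed

definition FF :: "real \<Rightarrow> nat \<Rightarrow> real \<Rightarrow> real \<Rightarrow> real" where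
  "FF b k r t = Re (cis (- 2 * real k * t) * (1 + complex_of_real r * cis (2 * t)) powr complex_of_real b)"

lemma of_real_gchoose: "(complex_of_real b gchoose n) = complex_of_real (b gchoose n)"
  by (simp add: gbinomial_prod_rev)

lemma FF_sums:
  assumes "0 \<le> r" "r < 1"
  shows "(\<lambda>m. (b gchoose m) * r ^ m * cos (2 * of_int (int m - int k) * t)) sums FF b k r t"
proof -
  have "norm (complex_of_real r * cis (2 * t)) < 1" using assms by (simp add: norm_mult)
  from gen_binomial_complex[OF this, of "complex_of_real b"]
  have "(\<lambda>n. cis (- 2 * real k * t) * ((complex_of_real b gchoose n) * (complex_of_real r * cis (2 * t)) ^ n))
     sums (cis (- 2 * real k * t) * (1 + complex_of_real r * cis (2 * t)) powr complex_of_real b)"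
    by (rule sums_mult)
  from sums_Re[OF this] show ?thesis
    unfolding FF_def
  proof (rule back_subst[of "\<lambda>f. f sums _"], intro ext)
    fix m
    have "cis (- 2 * real k * t) * ((complex_of_real b gchoose m) * (complex_of_real r * cis (2 * t)) ^ m)
       = complex_of_real ((b gchoose m) * r ^ m) * cis (2 * of_int (int m - int k) * t)"
    proof -
      have p: "(complex_of_real r * cis (2 * t)) ^ m = complex_of_real (r ^ m) * cis (real m * (2 * t))"
        by (simp only: power_mult_distrib Complex.DeMoivre of_real_power)
      have q: "cis (- 2 * real k * t) * cis (real m * (2 * t)) = cis (2 * of_int (int m - int k) * t)"
        by (simp add: cis_mult algebra_simps)
      show ?thesis unfolding p of_real_gchoose using q by (simp add: algebra_simps)
    qed
    then show "Re (cis (- 2 * real k * t) * ((complex_of_real b gchoose m) * (complex_of_real r * cis (2 * t)) ^ m))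
       = (b gchoose m) * r ^ m * cos (2 * of_int (int m - int k) * t)"
      by (simp add: Re_complex_of_real)
  qed
qed

lemma gchoose_abs_summable:
  fixes b r :: real
  assumes "\<bar>r\<bar> < 1"
  shows "summable (\<lambda>m. \<bar>(b gchoose m) * r ^ m\<bar>)"
proof -
  have "ereal (norm r) < conv_radius (\<lambda>n. b gchoose n)"
    using assms by (simp add: conv_radius_gchoose)
  from abs_summable_in_conv_radius[OF this] show ?thesis by simp
qed

lemma FF_integral_lt1:
  assumes "0 \<le> r" "r < 1"
  shows "(FF b k r has_integral pi * (b gchoose k) * r ^ k) {-pi/2..pi/2}"
proof -
  define c where "c m = (b gchoose m) * r ^ m" for m
  define f where "f N t = (\<Sum>m<N. c m * cos (2 * of_int (int m - int k) * t))" for N t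
  define h where "h t = (\<Sum>m. \<bar>c m\<bar>)" for t :: real
  have summ: "summable (\<lambda>m. \<bar>c m\<bar>)"
    unfolding c_def using assms by (intro gchoose_abs_summable) simp
  have fi: "(f N has_integral (\<Sum>m<N. c m * (if int m - int k = 0 then pi else 0))) {-pi/2..pi/2}" for N
    unfolding f_def
    by (intro has_integral_sum finite_lessThan has_integral_mult_right cos_int_integral)
  have fiv: "(\<Sum>m<N. c m * (if int m - int k = 0 then pi else 0)) = (if k < N then pi * (b gchoose k) * r ^ k else 0)" for N
  proof -
    have "(\<Sum>m<N. c m * (if int m - int k = 0 then pi else 0)) = (\<Sum>m<N. if m = k then c k * pi else 0)"
      by (intro sum.cong) auto
    also have "\<dots> = (if k < N then pi * (b gchoose k) * r ^ k else 0)"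
      by (simp add: sum.delta c_def)
    finally show ?thesis .
  qed
  have hi: "h integrable_on {-pi/2..pi/2}" unfolding h_def by (rule integrable_const_ivl)
  have le: "norm (f N t) \<le> h t" for N t
  proof -
    have "norm (f N t) \<le> (\<Sum>m<N. \<bar>c m * cos (2 * of_int (int m - int k) * t)\<bar>)"
      unfolding f_def real_norm_def by (rule sum_abs)
    also have "\<dots> \<le> (\<Sum>m<N. \<bar>c m\<bar>)"
      by (intro sum_mono) (simp add: abs_mult mult_left_le)
    also have "\<dots> \<le> h t" unfolding h_def by (intro sum_le_suminf summ) auto
    finally show ?thesis .
  qed
  have conv: "(\<lambda>N. f N t) \<longlonglongrightarrow> FF b k r t" for t
    using FF_sums[OF assms, of b k t] unfolding sums_def f_def c_def by simp
  note dc = dominated_convergence[of f "{-pi/2..pi/2}" h "FF b k r", OF _ hi le conv]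
  have fint: "f N integrable_on {-pi/2..pi/2}" for N using fi by blast
  have i1: "FF b k r integrable_on {-pi/2..pi/2}" using dc(1) fint by blast
  have "(\<lambda>N. integral {-pi/2..pi/2} (f N)) \<longlonglongrightarrow> integral {-pi/2..pi/2} (FF b k r)"
    using dc(2) fint by blast
  moreover have "(\<lambda>N. integral {-pi/2..pi/2} (f N)) \<longlonglongrightarrow> pi * (b gchoose k) * r ^ k"
  proof (rule tendsto_eventually)
    show "\<forall>\<^sub>F N in sequentially. integral {-pi/2..pi/2} (f N) = pi * (b gchoose k) * r ^ k"
      using eventually_gt_at_top[of k]
      by eventually_elim (use fi fiv integral_unique in metis)
  qed
  ultimately have "integral {-pi/2..pi/2} (FF b k r) = pi * (b gchoose k) * r ^ k"
    using LIMSEQ_unique by blast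
  with i1 show ?thesis using integrable_integral by metis
qed

lemma FF_one:
  assumes "-pi/2 < t" "t < pi/2"
  shows "FF b k 1 t = (2 * cos t) powr b * cos ((b - 2 * real k) * t)"
proof -
  have c: "cos t > 0" using assms by (intro cos_gt_zero_pi) auto
  define u where "u = 2 * cos t"
  have u: "u > 0" using c by (simp add: u_def)
  have e: "1 + cis (2 * t) = exp (complex_of_real (ln u) + \<i> * complex_of_real t)"
  proof -
    have "exp (complex_of_real (ln u) + \<i> * complex_of_real t) = complex_of_real u * cis t"
      using u by (simp add: exp_add exp_of_real cis_conv_exp[symmetric])
    also have "\<dots> = 1 + cis (2 * t)"
    proof -
      have cd: "cos (2 * t) = 2 * cos t * cos t - 1" by (simp add: cos_double_cos power2_eq_square)
      have sd: "sin (2 * t) = 2 * sin t * cos t" by (rule sin_double)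
      show ?thesis unfolding u_def by (simp add: complex_eq_iff cd sd)
    qed
    finally show ?thesis by simp
  qed
  have l: "ln (1 + cis (2 * t)) = complex_of_real (ln u) + \<i> * complex_of_real t"
    unfolding e using assms by (intro Ln_exp) auto
  have "(1 + cis (2 * t)) powr complex_of_real b = exp (complex_of_real b * (complex_of_real (ln u) + \<i> * complex_of_real t))"
    unfolding powr_def l by (simp add: e)
  also have "\<dots> = complex_of_real (u powr b) * cis (b * t)"
  proof -
    have x: "exp (complex_of_real b * complex_of_real (ln u)) = complex_of_real (exp (b * ln u))"
      by (simp only: of_real_mult[symmetric] exp_of_real)
    show ?thesis
      using u by (simp add: algebra_simps exp_add x cis_conv_exp powr_def)
  qed
  finally have p: "(1 + cis (2 * t)) powr complex_of_real b = complex_of_real (u powr b) * cis (b * t)" .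
  show ?thesis unfolding FF_def of_real_1 mult_1_left p u_def[symmetric]
    by (simp add: cis_mult algebra_simps cos_diff)
qed

lemma FF_bound:
  assumes "0 \<le> r" "r \<le> 1" "0 \<le> b"
  shows "\<bar>FF b k r t\<bar> \<le> 2 powr b"
proof -
  have "\<bar>FF b k r t\<bar> \<le> norm (cis (- 2 * real k * t) * (1 + complex_of_real r * cis (2 * t)) powr complex_of_real b)"
    unfolding FF_def by (rule abs_Re_le_cmod)
  also have "\<dots> = norm (1 + complex_of_real r * cis (2 * t)) powr b"
    by (simp add: norm_mult norm_powr_real_powr')
  also have "\<dots> \<le> 2 powr b"
  proof (rule powr_mono2)
    have "norm (1 + complex_of_real r * cis (2 * t)) \<le> norm (1::complex) + norm (complex_of_real r * cis (2 * t))"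
      by (rule norm_triangle_ineq)
    also have "\<dots> \<le> 2" using assms by (simp add: norm_mult)
    finally show "norm (1 + complex_of_real r * cis (2 * t)) \<le> 2" .
  qed (use assms in auto)
  finally show ?thesis .
qed

lemma FF_tendsto:
  assumes "-pi/2 < t" "t < pi/2" and r: "r \<longlonglongrightarrow> 1"
  shows "(\<lambda>j. FF b k (r j) t) \<longlonglongrightarrow> FF b k 1 t"
proof -
  have c: "cos t > 0" using assms by (intro cos_gt_zero_pi) auto
  have "Re (1 + cis (2 * t)) = 2 * cos t * cos t" by (simp add: cos_double_cos power2_eq_square)
  then have "Re (1 + cis (2 * t)) > 0" using c by simp
  then have nz: "1 + cis (2 * t) \<notin> \<real>\<^sub>\<le>\<^sub>0"
    by (metis complex_nonpos_Reals_iff not_le)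
  have "(\<lambda>j. 1 + complex_of_real (r j) * cis (2 * t)) \<longlonglongrightarrow> 1 + complex_of_real 1 * cis (2 * t)"
    by (intro tendsto_intros r)
  then have "(\<lambda>j. (1 + complex_of_real (r j) * cis (2 * t)) powr complex_of_real b) \<longlonglongrightarrow> (1 + cis (2 * t)) powr complex_of_real b"
    using nz by (intro tendsto_powr_complex) auto
  then have "(\<lambda>j. cis (- 2 * real k * t) * (1 + complex_of_real (r j) * cis (2 * t)) powr complex_of_real b) \<longlonglongrightarrow> cis (- 2 * real k * t) * (1 + cis (2 * t)) powr complex_of_real b"
    by (rule tendsto_mult[OF tendsto_const])
  then show ?thesis unfolding FF_def of_real_1 mult_1_left
    by (rule tendsto_Re)
qed

lemma key_integral:
  assumes "0 \<le> b"
  shows "((\<lambda>t. (2 * cos t) powr b * cos ((b - 2 * real k) * t)) has_integral pi * (b gchoose k)) {-pi/2<..<pi/2}"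
proof -
  define r where "r j = 1 - inverse (real (Suc j))" for j
  have r0: "0 \<le> r j" "r j < 1" for j unfolding r_def by (auto simp: field_simps)
  have rl: "r \<longlonglongrightarrow> 1" unfolding r_def
    using LIMSEQ_inverse_real_of_nat_add_minus[of 1] by simp
  define S where "S = {-pi/2<..<pi/2}"
  have fi: "(FF b k (r j) has_integral pi * (b gchoose k) * r j ^ k) S" for j
    unfolding S_def using FF_integral_lt1[OF r0[of j], of b k] has_integral_Icc_iff_Ioo by blast
  have fint: "FF b k (r j) integrable_on S" for j using fi by blast
  have hi: "(\<lambda>t. 2 powr b) integrable_on S" unfolding S_def
    using integrable_on_Icc_iff_Ioo integrable_const_ivl by blast
  have le: "norm (FF b k (r j) t) \<le> 2 powr b" for j t
    using FF_bound[of "r j" b k t] r0[of j] assms by simp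
  have conv: "(\<lambda>j. FF b k (r j) t) \<longlonglongrightarrow> FF b k 1 t" if "t \<in> S" for t
    using that FF_tendsto[OF _ _ rl] unfolding S_def by auto
  note dc = dominated_convergence[of "\<lambda>j. FF b k (r j)" S "\<lambda>_. 2 powr b" "FF b k 1", OF fint hi le conv]
  have "(\<lambda>j. pi * (b gchoose k) * r j ^ k) \<longlonglongrightarrow> pi * (b gchoose k) * 1 ^ k"
    by (intro tendsto_intros rl)
  moreover have "(\<lambda>j. pi * (b gchoose k) * r j ^ k) = (\<lambda>j. integral S (FF b k (r j)))"
    by (intro ext integral_unique[symmetric] fi)
  ultimately have "integral S (FF b k 1) = pi * (b gchoose k)"
    using dc(2) LIMSEQ_unique by fastforce
  then have "(FF b k 1 has_integral pi * (b gchoose k)) S"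
    using dc(1) integrable_integral by metis
  then show ?thesis unfolding S_def
    by (rule has_integral_cong[THEN iffD1, rotated]) (simp add: FF_one)
qed

lemma nd_theta:
  assumes "-pi/2 < t" "t < pi/2"
  shows "nu_dens lam (2 * sin t) * (2 * cos t) = (2 * cos t) powr (1 - 1/lam) * cos ((1 - 1/lam) * t)"
proof -
  have c: "cos t > 0" using assms by (intro cos_gt_zero_pi) auto
  have as: "arcsin (2 * sin t / 2) = t" using assms by (simp add: arcsin_sin)
  have q: "4 - (2 * sin t)^2 = (2 * cos t) powr 2"
    using c by (simp add: powr_realpow power_mult_distrib sin_squared_eq algebra_simps)
  have "(4 - (2 * sin t)^2) powr (- 1 / (2 * lam)) = (2 * cos t) powr (- 1 / lam)"
    unfolding q powr_powr by simp
  then have "nu_dens lam (2 * sin t) * (2 * cos t) = cos ((1 - 1/lam) * t) * ((2 * cos t) powr (- 1 / lam) * (2 * cos t) powr 1)"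
    unfolding nu_dens_def as using c by simp
  also have "\<dots> = (2 * cos t) powr (1 - 1/lam) * cos ((1 - 1/lam) * t)"
    using c by (simp add: powr_diff powr_minus divide_inverse mult.commute)
  finally show ?thesis .
qed

definition Sn :: "real \<Rightarrow> nat \<Rightarrow> real" where
  "Sn lam n = (\<Sum>k\<le>n. real (n choose k) * (-1) ^ k * 4 ^ (n - k) * (((1 - 1/lam) + 2 * real k) gchoose k))"

lemma even_theta:
  assumes "lam \<ge> 1"
  shows "((\<lambda>t. ((2 * sin t) ^ (2 * n) * nu_dens lam (2 * sin t)) * (2 * cos t)) has_integral pi * Sn lam n) {-pi/2<..<pi/2}"
proof -
  define a where "a = 1 - 1/lam"
  have a0: "0 \<le> a" using assms unfolding a_def by (simp add: field_simps)
  have ki: "((\<lambda>t. real (n choose k) * (-1) ^ k * 4 ^ (n - k) * ((2 * cos t) powr (a + 2 * real k) * cos ((a + 2 * real k - 2 * real k) * t)))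
      has_integral real (n choose k) * (-1) ^ k * 4 ^ (n - k) * (pi * ((a + 2 * real k) gchoose k))) {-pi/2<..<pi/2}" for k
    by (intro has_integral_mult_right key_integral) (use a0 in simp)
  have "((\<lambda>t. \<Sum>k\<le>n. real (n choose k) * (-1) ^ k * 4 ^ (n - k) * ((2 * cos t) powr (a + 2 * real k) * cos ((a + 2 * real k - 2 * real k) * t)))
      has_integral (\<Sum>k\<le>n. real (n choose k) * (-1) ^ k * 4 ^ (n - k) * (pi * ((a + 2 * real k) gchoose k)))) {-pi/2<..<pi/2}"
    by (intro has_integral_sum ki finite_atMost)
  moreover have "(\<Sum>k\<le>n. real (n choose k) * (-1) ^ k * 4 ^ (n - k) * (pi * ((a + 2 * real k) gchoose k))) = pi * Sn lam n"
    unfolding Sn_def a_def by (simp add: sum_distrib_left algebra_simps)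
  moreover have "(\<Sum>k\<le>n. real (n choose k) * (-1) ^ k * 4 ^ (n - k) * ((2 * cos t) powr (a + 2 * real k) * cos ((a + 2 * real k - 2 * real k) * t)))
      = ((2 * sin t) ^ (2 * n) * nu_dens lam (2 * sin t)) * (2 * cos t)" if t: "t \<in> {-pi/2<..<pi/2}" for t
  proof -
    have c: "cos t > 0" using t by (intro cos_gt_zero_pi) auto
    have s2: "(2 * sin t)^2 = 4 - (2 * cos t)^2"
      by (simp add: power_mult_distrib sin_squared_eq algebra_simps)
    have "(2 * sin t) ^ (2 * n) = (4 - (2 * cos t)^2) ^ n"
      by (simp only: power_mult s2)
    also have "\<dots> = (\<Sum>k\<le>n. real (n choose k) * (-((2 * cos t)^2)) ^ k * 4 ^ (n - k))"
      using binomial_ring[of "-((2 * cos t)^2)" 4 n] by (simp add: algebra_simps)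
    finally have sq: "(2 * sin t) ^ (2 * n) = (\<Sum>k\<le>n. real (n choose k) * (-((2 * cos t)^2)) ^ k * 4 ^ (n - k))" .
    have pw: "(2 * cos t) powr (a + 2 * real k) = (2 * cos t) ^ (2 * k) * (2 * cos t) powr a" for k
    proof -
      have "0 < 2 * cos t" using c by simp
      from powr_realpow[OF this, of "2 * k"]
      have e: "(2 * cos t) powr (real (2 * k)) = (2 * cos t) ^ (2 * k)" .
      have x: "a + 2 * real k = real (2 * k) + a" by simp
      show ?thesis unfolding x powr_add e ..
    qed
    have "((2 * sin t) ^ (2 * n) * nu_dens lam (2 * sin t)) * (2 * cos t)
        = (2 * sin t) ^ (2 * n) * ((2 * cos t) powr a * cos (a * t))"
      using nd_theta[of t lam] t unfolding a_def by (simp add: mult.assoc)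
    also have "\<dots> = (\<Sum>k\<le>n. real (n choose k) * (-1) ^ k * 4 ^ (n - k) * ((2 * cos t) powr (a + 2 * real k) * cos ((a + 2 * real k - 2 * real k) * t)))"
      unfolding sq sum_distrib_right pw
    proof (intro sum.cong refl)
      fix k
      have tm: "(-((2 * cos t)^2))^k = (-1)^k * (2 * cos t)^(2*k)"
        by (subst power_minus) (simp only: power_mult)
      show "real (n choose k) * (-((2 * cos t)^2))^k * 4^(n-k) * ((2 * cos t) powr a * cos (a * t)) =
         real (n choose k) * (-1)^k * 4^(n-k) * ((2 * cos t) ^ (2 * k) * (2 * cos t) powr a * cos ((a + 2 * real k - 2 * real k) * t))"
        unfolding tm by (simp only: add_diff_cancel_right' mult_ac)
    qed
    finally show ?thesis by simp
  qed
  ultimately show ?thesis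
    by (subst has_integral_cong[symmetric]) auto
qed

lemma hk_to_lborel:
  fixes f :: "real \<Rightarrow> real"
  assumes "open S" "continuous_on S f" "(f has_integral I) S" "\<And>x. x \<in> S \<Longrightarrow> 0 \<le> f x"
  shows "set_integrable lborel S f" "(LINT x:S|lborel. f x) = I"
proof -
  have "f absolutely_integrable_on S"
    using assms by (intro nonnegative_absolutely_integrable_1) auto
  then have "integrable lebesgue (\<lambda>x. indicator S x *\<^sub>R f x)"
    unfolding set_integrable_def .
  moreover have "(\<lambda>x. indicator S x *\<^sub>R f x) \<in> borel_measurable lborel"
    using borel_measurable_continuous_on_indicator[OF _ assms(2)] assms(1) by simp
  ultimately have "integrable lborel (\<lambda>x. indicator S x *\<^sub>R f x)"
    using integrable_completion by blast
  then show si: "set_integrable lborel S f" unfolding set_integrable_def .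
  show "(LINT x:S|lborel. f x) = I"
    using set_borel_integral_eq_integral(2)[OF si] assms(3) integral_unique by metis
qed

lemma four_minus_sq_pos: "-2 < (x::real) \<Longrightarrow> x < 2 \<Longrightarrow> 4 - x^2 > 0"
proof -
  assume "-2 < x" "x < 2"
  then have "(2-x)*(2+x) > 0" by (intro mult_pos_pos) auto
  then show ?thesis by (simp add: power2_eq_square algebra_simps)
qed

lemma continuous_on_nu_dens: "continuous_on {-2<..<2} (nu_dens lam)"
proof -
  have a: "continuous_on {-2<..<2} (\<lambda>x::real. arcsin (x / 2))"
    by (intro continuous_on_arcsin continuous_intros) auto
  have b: "continuous_on {-2<..<2} (\<lambda>x::real. (4 - x^2) powr (- 1 / (2 * lam)))"
    by (intro continuous_on_powr continuous_intros) (use four_minus_sq_pos in force)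
  show ?thesis unfolding nu_dens_def
    by (intro continuous_intros a b)
qed

lemma isCont_nu_dens:
  assumes "-2 < x" "x < 2"
  shows "isCont (nu_dens lam) x"
  using continuous_on_nu_dens[of lam] assms
  by (simp add: continuous_on_eq_continuous_at)




lemma nu_dens_theta_nonneg:
  assumes "lam \<ge> 1" "-pi/2 < t" "t < pi/2"
  shows "0 \<le> nu_dens lam (2 * sin t)"
proof -
  have c: "cos t > 0" using assms by (intro cos_gt_zero_pi) auto
  have a: "0 \<le> 1 - 1/lam" "1 - 1/lam \<le> 1" using assms by (auto simp: field_simps)
  have "\<bar>(1 - 1/lam) * t\<bar> \<le> \<bar>t\<bar>" using a by (simp add: abs_mult mult_left_le_one_le)
  moreover have "\<bar>t\<bar> < pi/2" using assms by (simp add: abs_less_iff)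
  ultimately have "\<bar>(1 - 1/lam) * t\<bar> < pi/2" by simp
  then have "-(pi/2) < (1 - 1/lam) * t \<and> (1 - 1/lam) * t < pi/2" by arith
  then have "0 \<le> cos ((1 - 1/lam) * t)" by (intro cos_ge_zero) auto
  then have "0 \<le> nu_dens lam (2 * sin t) * (2 * cos t)" unfolding nd_theta[OF assms(2,3)] by simp
  then show ?thesis using c by (simp add: zero_le_mult_iff)
qed

lemma sin_bounds: "-pi/2 < t \<Longrightarrow> t < pi/2 \<Longrightarrow> -2 < 2 * sin t \<and> 2 * sin t < 2"
proof -
  assume "-pi/2 < t" "t < pi/2"
  then have c: "cos t > 0" by (intro cos_gt_zero_pi) auto
  have "(sin t)^2 < 1" using c sin_squared_eq[of t] by (simp add: power2_eq_square)
  then have "\<bar>sin t\<bar> < 1" by (simp add: abs_square_less_1)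
  then show ?thesis by auto
qed

lemma even_x:
  assumes "lam \<ge> 1"
  shows "set_integrable lborel {-2<..<2} (\<lambda>x. x^(2*n) * nu_dens lam x)"
    "(LBINT x:{-2<..<2}. x^(2*n) * nu_dens lam x) = pi * Sn lam n"
proof -
  let ?f = "\<lambda>x::real. x^(2*n) * nu_dens lam x"
  let ?g = "\<lambda>t::real. 2 * sin t"
  let ?g' = "\<lambda>t::real. 2 * cos t"
  have cont: "continuous_on {-pi/2<..<pi/2} (\<lambda>t. ?f (?g t) * ?g' t)"
  proof (intro continuous_at_imp_continuous_on ballI)
    fix t assume "t \<in> {-pi/2<..<pi/2}"
    then have "-2 < ?g t" "?g t < 2" using sin_bounds[of t] by auto
    then have "isCont (nu_dens lam) (?g t)" by (rule isCont_nu_dens)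
    moreover have "isCont (\<lambda>x::real. x^(2*n)) (?g t)" by (intro continuous_intros)
    ultimately have fc: "isCont ?f (?g t)" using isCont_mult by blast
    have c1: "isCont ?g t" by (intro continuous_intros)
    from isCont_o2[OF c1 fc] have "isCont (\<lambda>t. ?f (?g t)) t" .
    then show "isCont (\<lambda>t. ?f (?g t) * ?g' t) t"
      by (rule isCont_mult) (intro continuous_intros)
  qed
  have nn: "0 \<le> ?f (?g t) * ?g' t" if "t \<in> {-pi/2<..<pi/2}" for t
  proof -
    have "cos t \<ge> 0" using that by (intro cos_ge_zero) auto
    then show ?thesis using nu_dens_theta_nonneg[OF assms, of t] that by (simp add: power_mult)
  qed
  note hk = hk_to_lborel[where S="{-pi/2<..<pi/2}" and f="\<lambda>t. ?f (?g t) * ?g' t", OF _ cont even_theta[OF assms, of n] nn]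
  note sub = interval_integral_substitution_nonneg[where a="ereal (-pi/2)" and b="ereal (pi/2)" and g="?g" and g'="?g'"
     and f="?f" and A="ereal (-2)" and B="ereal 2"]
  have prem: "ereal (-pi/2) < ereal (pi/2)"
     "\<And>x. ereal (-pi/2) < ereal x \<Longrightarrow> ereal x < ereal (pi/2) \<Longrightarrow> DERIV ?g x :> ?g' x"
     "\<And>x. ereal (-pi/2) < ereal x \<Longrightarrow> ereal x < ereal (pi/2) \<Longrightarrow> isCont ?f (?g x)"
     "\<And>x. ereal (-pi/2) < ereal x \<Longrightarrow> ereal x < ereal (pi/2) \<Longrightarrow> isCont ?g' x"
     "\<And>x. ereal (-pi/2) < ereal x \<Longrightarrow> ereal x < ereal (pi/2) \<Longrightarrow> 0 \<le> ?f (?g x)"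
     "\<And>x. ereal (-pi/2) \<le> ereal x \<Longrightarrow> ereal x \<le> ereal (pi/2) \<Longrightarrow> 0 \<le> ?g' x"
     "((ereal \<circ> ?g \<circ> real_of_ereal) \<longlongrightarrow> ereal (-2)) (at_right (ereal (-pi/2)))"
     "((ereal \<circ> ?g \<circ> real_of_ereal) \<longlongrightarrow> ereal 2) (at_left (ereal (pi/2)))"
     "set_integrable lborel (einterval (ereal (-pi/2)) (ereal (pi/2))) (\<lambda>x. ?f (?g x) * ?g' x)"
  proof -
    show "ereal (-pi/2) < ereal (pi/2)" by simp
    show "\<And>x. ereal (-pi/2) < ereal x \<Longrightarrow> ereal x < ereal (pi/2) \<Longrightarrow> DERIV ?g x :> ?g' x"
      by (auto intro!: derivative_eq_intros)
    show "\<And>x. ereal (-pi/2) < ereal x \<Longrightarrow> ereal x < ereal (pi/2) \<Longrightarrow> isCont ?g' x"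
      by (intro continuous_intros)
    show "isCont ?f (?g x)" if "ereal (-pi/2) < ereal x" "ereal x < ereal (pi/2)" for x
    proof -
      have "-2 < ?g x" "?g x < 2" using sin_bounds[of x] that by auto
      then have "isCont (nu_dens lam) (?g x)" by (rule isCont_nu_dens)
      moreover have "isCont (\<lambda>x::real. x^(2*n)) (?g x)" by (intro continuous_intros)
      ultimately show "isCont ?f (?g x)" using isCont_mult by blast
    qed
    show "0 \<le> ?f (?g x)" if "ereal (-pi/2) < ereal x" "ereal x < ereal (pi/2)" for x
      using nu_dens_theta_nonneg[OF assms, of x] that by (simp add: power_mult)
    show "0 \<le> ?g' x" if "ereal (-pi/2) \<le> ereal x" "ereal x \<le> ereal (pi/2)" for x
      using that cos_ge_zero[of x] by simp
    show "((ereal \<circ> ?g \<circ> real_of_ereal) \<longlongrightarrow> ereal (-2)) (at_right (ereal (-pi/2)))"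
      by (auto simp: ereal_tendsto_simps intro!: tendsto_eq_intros)
    show "((ereal \<circ> ?g \<circ> real_of_ereal) \<longlongrightarrow> ereal 2) (at_left (ereal (pi/2)))"
      by (auto simp: ereal_tendsto_simps intro!: tendsto_eq_intros)
    show "set_integrable lborel (einterval (ereal (-pi/2)) (ereal (pi/2))) (\<lambda>x. ?f (?g x) * ?g' x)"
      using hk(1) by simp
  qed
  note res = sub[OF prem]
  show "set_integrable lborel {-2<..<2} ?f" using res(1) by simp
  have "(LBINT x:{-2<..<2}. ?f x) = (LBINT x:{-pi/2<..<pi/2}. ?f (?g x) * ?g' x)"
    using res(2) by (simp add: interval_lebesgue_integral_def)
  also have "\<dots> = pi * Sn lam n" using hk(2) by simp
  finally show "(LBINT x:{-2<..<2}. ?f x) = pi * Sn lam n" .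
qed




lemma nu_dens_nonneg:
  assumes "lam \<ge> 1" "-2 < x" "x < 2"
  shows "0 \<le> nu_dens lam x"
proof -
  define t where "t = arcsin (x / 2)"
  have tb: "-(pi/2) \<le> t" "t \<le> pi/2" unfolding t_def using assms
    by (intro arcsin_lbound arcsin_ubound; simp)+
  have a: "0 \<le> 1 - 1/lam" "1 - 1/lam \<le> 1" using assms by (auto simp: field_simps)
  have "\<bar>(1 - 1/lam) * t\<bar> \<le> \<bar>t\<bar>" using a by (simp add: abs_mult mult_left_le_one_le)
  moreover have "\<bar>t\<bar> \<le> pi/2" using tb by (simp add: abs_le_iff)
  ultimately have "\<bar>(1 - 1/lam) * t\<bar> \<le> pi/2" by simp
  then have "-(pi/2) \<le> (1 - 1/lam) * t \<and> (1 - 1/lam) * t \<le> pi/2" by arith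
  then have "0 \<le> cos ((1 - 1/lam) * t)" by (intro cos_ge_zero) auto
  then show ?thesis unfolding nu_dens_def t_def[symmetric] by simp
qed

lemma nu_dens_even:
  assumes "-2 < x" "x < 2"
  shows "nu_dens lam (-x) = nu_dens lam x"
proof -
  have "arcsin (- x / 2) = - arcsin (x / 2)"
    using assms arcsin_minus[of "x/2"] by simp
  then show ?thesis unfolding nu_dens_def by simp
qed

lemma odd_x:
  assumes "lam \<ge> 1"
  shows "set_integrable lborel {-2<..<2} (\<lambda>x. x^(2*n+1) * nu_dens lam x)"
    "(LBINT x:{-2<..<2}. x^(2*n+1) * nu_dens lam x) = 0"
proof -
  let ?S = "{-2<..<2::real}"
  let ?h = "\<lambda>x::real. x^(2*n+1) * nu_dens lam x"
  have ie: "set_integrable lborel ?S (\<lambda>x. 2 * (x^(2*n) * nu_dens lam x))"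
    using even_x(1)[OF assms, of n] by simp
  have ct: "continuous_on ?S ?h"
    by (intro continuous_intros continuous_on_nu_dens)
  have ms: "set_borel_measurable lborel ?S ?h"
    unfolding set_borel_measurable_def
    using borel_measurable_continuous_on_indicator[OF _ ct] by simp
  show si: "set_integrable lborel ?S ?h"
  proof (rule set_integrable_bound[OF ie ms], intro AE_I2 impI)
    fix x :: real assume x: "x \<in> ?S"
    have nn: "0 \<le> nu_dens lam x" using nu_dens_nonneg[OF assms] x by auto
    have "\<bar>x\<bar> \<le> 2" using x by auto
    then have "\<bar>x\<bar>^(2*n) * \<bar>x\<bar> \<le> \<bar>x\<bar>^(2*n) * 2" by (intro mult_left_mono) auto
    then have "\<bar>x\<bar>^(2*n) * \<bar>x\<bar> * nu_dens lam x \<le> \<bar>x\<bar>^(2*n) * 2 * nu_dens lam x"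
      using nn by (intro mult_right_mono) auto
    moreover have "\<bar>x\<bar>^(2*n) = x^(2*n)" by (simp add: power_mult)
    ultimately show "norm (?h x) \<le> norm (2 * (x^(2*n) * nu_dens lam x))"
      using nn by (simp add: abs_mult power_abs mult_ac)
  qed
  have "(LBINT x:?S. ?h x) = (LBINT x:{x. - x \<in> ?S}. ?h (- x))"
    by (rule set_integral_reflect)
  also have "{x. - x \<in> ?S} = ?S" by auto
  also have "(LBINT x:?S. ?h (- x)) = (LBINT x:?S. - ?h x)"
    by (rule set_lebesgue_integral_cong) (auto simp: nu_dens_even)
  also have "\<dots> = - (LBINT x:?S. ?h x)"
    by (rule set_integral_uminus[OF si])
  finally show "(LBINT x:?S. ?h x) = 0" by simp
qed

lemma all_x:
  assumes "lam \<ge> 1"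
  shows "set_integrable lborel {-2<..<2} (\<lambda>x. x^k * nu_dens lam x)"
proof (cases "even k")
  case True
  then obtain n where "k = 2 * n" by (elim evenE)
  then show ?thesis using even_x(1)[OF assms, of n] by simp
next
  case False
  then obtain n where "k = 2 * n + 1" by (elim oddE)
  then show ?thesis using odd_x(1)[OF assms, of n] by simp
qed



lemma prod_poch:
  fixes c :: real
  shows "(\<Prod>m=k+2..2*k+1. real m - c) = pochhammer (real k + 2 - c) k"
proof -
  have "{k+2..2*k+1} = {0 + (k+2)..<k + (k+2)}" by auto
  then have "(\<Prod>m=k+2..2*k+1. real m - c) = (\<Prod>i=0..<k. real (i + (k+2)) - c)"
    by (simp only: prod.shift_bounds_nat_ivl)
  also have "\<dots> = (\<Prod>i=0..<k. (real k + 2 - c) + real i)"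
    by (intro prod.cong refl) simp
  also have "\<dots> = pochhammer (real k + 2 - c) k"
    by (simp add: pochhammer_prod)
  finally show ?thesis .
qed

lemma gch_poch:
  fixes a :: real
  shows "(a + 2 * real k gchoose k) = pochhammer (a + 1 + real k) k / fact k"
  by (simp add: gbinomial_pochhammer' algebra_simps)

lemma Sn_prod:
  "Sn lam n = (\<Sum>k=0..n. real (n choose k) * 4 ^ (n - k) * (-1) ^ k / fact k
               * (\<Prod>m=k+2..2*k+1. real m - 1 / lam))"
  unfolding Sn_def prod_poch gch_poch atLeast0AtMost
  by (intro sum.cong refl) (simp add: algebra_simps)

lemma dd: fixes z :: real shows "pochhammer z j * pochhammer (z+1/2) j = pochhammer (2*z) (2*j) / 4^j"
  proof -
    have e: "(of_nat (2^(2*j)) :: real) = 4^j" by (simp add: power_mult)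
    have h: "pochhammer (2*z) (2*j) = 4^j * (pochhammer z j * pochhammer (z+1/2) j)"
      using pochhammer_double[of z j] unfolding e by (simp only: mult.assoc)
    have "(4::real)^j \<noteq> 0" by simp
    then show ?thesis unfolding h by (rule nonzero_mult_div_cancel_left[symmetric])
  qed

lemma hyp_term:
  fixes z :: real
  assumes "z > 0" "j \<le> n"
  shows "4 ^ n * (pochhammer (- real n) j * pochhammer z j * pochhammer (z + 1/2) j
      / (pochhammer (2*z) j * pochhammer 1 j) * 1 ^ j / fact j)
   = real (n choose j) * (-1)^j * 4^(n-j) * (pochhammer (2*z + real j) j / fact j)"
proof -
  have d: "pochhammer z j * pochhammer (z+1/2) j = pochhammer (2*z) (2*j) / 4^j" by (rule dd)
  have p: "pochhammer (2*z) (2*j) = pochhammer (2*z) j * pochhammer (2*z + real j) j"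
  proof -
    have "2*j = j + j" by simp
    then show ?thesis by (simp only: pochhammer_product')
  qed
  have m: "pochhammer (- real n) j = (-1)^j * (real (n choose j) * fact j)"
  proof -
    have m1: "pochhammer (real n - real j + 1) j = real (n choose j) * fact j"
      unfolding binomial_gbinomial gbinomial_pochhammer' by simp
    show ?thesis unfolding pochhammer_minus m1 ..
  qed
  have one: "pochhammer 1 j = (fact j :: real)" by (simp add: pochhammer_fact)
  have nz: "pochhammer (2*z) j \<noteq> (0::real)" using pochhammer_pos[of "2*z" j] assms by simp
  have f: "4 ^ n = (4::real) ^ (n - j) * 4 ^ j" using assms by (simp add: power_add[symmetric])
  have "pochhammer (- real n) j * pochhammer z j * pochhammer (z + 1/2) j
      = (-1)^j * (real (n choose j) * fact j) * (pochhammer (2*z) j * pochhammer (2*z + real j) j / 4^j)"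
    by (simp only: m mult.assoc d p)
  then show ?thesis using nz unfolding one f by (simp add: field_simps)
qed

lemma hyp_eq:
  assumes "lam \<ge> 1"
  shows "2 ^ (2 * n) * hyp3F2 (- real n) (1 - 1 / (2 * lam)) (3 / 2 - 1 / (2 * lam)) (2 - 1 / lam) 1 1 = Sn lam n"
proof -
  define z where "z = 1 - 1 / (2 * lam)"
  have z0: "z > 0" using assms unfolding z_def by (simp add: field_simps)
  have z1: "3 / 2 - 1 / (2 * lam) = z + 1/2" "2 - 1 / lam = 2 * z" unfolding z_def by (simp_all add: field_simps)
  let ?t = "\<lambda>j. pochhammer (- real n) j * pochhammer z j * pochhammer (z + 1/2) j
      / (pochhammer (2*z) j * pochhammer 1 j) * 1 ^ j / fact j"
  have "hyp3F2 (- real n) z (z + 1/2) (2 * z) 1 1 = (\<Sum>j\<le>n. ?t j)"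
    unfolding hyp3F2_def
    by (rule suminf_finite) (auto simp: pochhammer_of_nat_eq_0_iff)
  then have "2 ^ (2 * n) * hyp3F2 (- real n) z (z + 1/2) (2 * z) 1 1 = (\<Sum>j\<le>n. 4 ^ n * ?t j)"
    by (simp add: sum_distrib_left power_mult)
  also have "\<dots> = (\<Sum>j\<le>n. real (n choose j) * (-1)^j * 4^(n-j) * (pochhammer (2*z + real j) j / fact j))"
    by (intro sum.cong refl hyp_term z0) auto
  also have "\<dots> = Sn lam n"
    unfolding Sn_def gch_poch by (intro sum.cong refl) (simp add: z_def algebra_simps)
  finally show ?thesis unfolding z1 z_def .
qed

lemma gamma_val:
  assumes "lam \<ge> 1"
  shows "2 powr (1 - 1 / lam) * sqrt pi * Gamma (1 - 1 / (2 * lam)) * Gamma (3 / 2 - 1 / (2 * lam)) / Gamma (2 - 1 / lam) = pi"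
proof -
  define z where "z = 1 - 1 / (2 * lam)"
  have z0: "z > 0" using assms unfolding z_def by (simp add: field_simps)
  have z1: "3 / 2 - 1 / (2 * lam) = z + 1/2" "2 - 1 / lam = 2 * z" "1 - 1 / lam = 2 * z - 1"
    unfolding z_def by (simp_all add: field_simps)
  have nz: "complex_of_real z \<notin> \<int>\<^sub>\<le>\<^sub>0" "complex_of_real z + 1/2 \<notin> \<int>\<^sub>\<le>\<^sub>0"
    using z0 by (auto elim!: nonpos_Ints_cases simp: complex_eq_iff)
  from Gamma_legendre_duplication[OF nz]
  have "Gamma (complex_of_real z) * Gamma (complex_of_real z + 1/2) =
      exp ((1 - 2 * complex_of_real z) * complex_of_real (ln 2)) * complex_of_real (sqrt pi) * Gamma (2 * complex_of_real z)" .
  then have "complex_of_real (Gamma z * Gamma (z + 1/2)) = complex_of_real (exp ((1 - 2 * z) * ln 2) * sqrt pi * Gamma (2 * z))"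
    by (simp add: Gamma_complex_of_real[symmetric] exp_of_real[symmetric])
  then have g: "Gamma z * Gamma (z + 1/2) = 2 powr (1 - 2 * z) * sqrt pi * Gamma (2 * z)"
    by (simp only: of_real_eq_iff powr_def) simp
  have gp: "Gamma (2 * z) > 0" using z0 by (intro Gamma_real_pos) simp
  have "2 powr (2 * z - 1) * 2 powr (1 - 2 * z) = (1::real)" by (simp add: powr_add[symmetric])
  then show ?thesis unfolding z1 z_def[symmetric] using gp
    by (simp add: mult.assoc g) (simp add: field_simps)
qed




lemma ei: "einterval (-2::ereal) 2 = {-2<..<2}"
proof -
  have "einterval (ereal (-2)) (ereal 2) = {-2<..<2}" by (rule einterval_eq_Icc)
  then show ?thesis by simp
qed

theorem mainTheorem7:
  fixes lam :: real
  assumes "lam \<ge> 1"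
  shows "interval_lebesgue_integrable lborel (-2) 2 (nu_dens lam)
    \<and> c_const lam = 2 powr (1 - 1 / lam) * sqrt pi
          * Gamma (1 - 1 / (2 * lam)) * Gamma (3 / 2 - 1 / (2 * lam)) / Gamma (2 - 1 / lam)
    \<and> prob_space (nu lam)
    \<and> (\<forall>k::nat. integrable (nu lam) (\<lambda>x. x ^ k))
    \<and> (\<forall>n::nat. integral\<^sup>L (nu lam) (\<lambda>x. x ^ (2 * n + 1)) = 0)
    \<and> (\<forall>n::nat. integral\<^sup>L (nu lam) (\<lambda>x. x ^ (2 * n))
          = 2 ^ (2 * n) * hyp3F2 (- real n) (1 - 1 / (2 * lam)) (3 / 2 - 1 / (2 * lam))
                                 (2 - 1 / lam) 1 1)
    \<and> (\<forall>n::nat. integral\<^sup>L (nu lam) (\<lambda>x. x ^ (2 * n))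
          = (\<Sum>k=0..n. real (n choose k) * 4 ^ (n - k) * (-1) ^ k / fact k
               * (\<Prod>m=k+2..2*k+1. real m - 1 / lam)))"
proof -
  let ?S = "{-2<..<2::real}"
  have S0: "Sn lam 0 = 1" by (simp add: Sn_def)
  have int0: "set_integrable lborel ?S (nu_dens lam)"
    using all_x[OF assms, of 0] by simp
  have F1: "interval_lebesgue_integrable lborel (-2) 2 (nu_dens lam)"
    unfolding interval_lebesgue_integrable_def ei using int0 by simp
  have cpi: "c_const lam = pi"
    unfolding c_const_def interval_lebesgue_integral_def ei
    using even_x(2)[OF assms, of 0] S0 by simp
  have F2: "c_const lam = 2 powr (1 - 1 / lam) * sqrt pi
          * Gamma (1 - 1 / (2 * lam)) * Gamma (3 / 2 - 1 / (2 * lam)) / Gamma (2 - 1 / lam)"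
    unfolding cpi using gamma_val[OF assms] by simp
  define g where "g x = indicator ?S x * nu_dens lam x / pi" for x
  have nu_eq: "nu lam = density lborel (\<lambda>x. ennreal (g x))"
    unfolding nu_def g_def cpi ..
  have gm: "g \<in> borel_measurable lborel"
  proof -
    have ct: "continuous_on ?S (\<lambda>x. nu_dens lam x / pi)"
      by (intro continuous_intros continuous_on_nu_dens) auto
    have "(\<lambda>x. indicator ?S x *\<^sub>R (nu_dens lam x / pi)) \<in> borel_measurable borel"
      by (rule borel_measurable_continuous_on_indicator[OF _ ct]) simp
    moreover have "(\<lambda>x. indicator ?S x *\<^sub>R (nu_dens lam x / pi)) = g"
      unfolding g_def by (simp add: fun_eq_iff)
    ultimately show ?thesis by simp
  qed
  have gnn: "0 \<le> g x" for x
    unfolding g_def using nu_dens_nonneg[OF assms, of x] by (auto split: split_indicator)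
  have gk: "(\<lambda>x. g x *\<^sub>R x ^ k) = (\<lambda>x. (1/pi) * (indicator ?S x *\<^sub>R (x ^ k * nu_dens lam x)))" for k
    unfolding g_def by (simp add: fun_eq_iff)
  have intk: "integrable lborel (\<lambda>x. g x *\<^sub>R x ^ k)" for k
    unfolding gk using all_x[OF assms, of k] unfolding set_integrable_def by simp
  have valk: "integral\<^sup>L lborel (\<lambda>x. g x *\<^sub>R x ^ k) = (1/pi) * (LBINT x:?S. x ^ k * nu_dens lam x)" for k
    unfolding gk set_lebesgue_integral_def by simp
  have xm: "(\<lambda>x::real. x ^ k) \<in> borel_measurable lborel" for k by measurable
  have F4: "integrable (nu lam) (\<lambda>x. x ^ k)" for k
    unfolding nu_eq using integrable_density[OF xm gm] gnn intk by simp
  have mom: "integral\<^sup>L (nu lam) (\<lambda>x. x ^ k) = (1/pi) * (LBINT x:?S. x ^ k * nu_dens lam x)" for k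
    unfolding nu_eq using integral_density[OF xm gm] gnn valk by simp
  have F3: "prob_space (nu lam)"
  proof (rule prob_spaceI)
    have "emeasure (nu lam) (space (nu lam)) = (\<integral>\<^sup>+ x. ennreal (g x) \<partial>lborel)"
      unfolding nu_eq using gm by (subst emeasure_density) auto
    also have "\<dots> = ennreal (integral\<^sup>L lborel g)"
      using intk[of 0] gnn by (intro nn_integral_eq_integral) auto
    also have "integral\<^sup>L lborel g = 1"
      using valk[of 0] even_x(2)[OF assms, of 0] S0 by simp
    finally show "emeasure (nu lam) (space (nu lam)) = 1" by simp
  qed
  have F5: "integral\<^sup>L (nu lam) (\<lambda>x. x ^ (2 * n + 1)) = 0" for n
    unfolding mom using odd_x(2)[OF assms, of n] by simp
  have F6: "integral\<^sup>L (nu lam) (\<lambda>x. x ^ (2 * n)) = Sn lam n" for n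
    unfolding mom using even_x(2)[OF assms, of n] by simp
  show ?thesis
    using F1 F2 F3 F4 F5 F6 hyp_eq[OF assms] Sn_prod by auto
qed

end
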